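(* Let $k\ge 0$ and $d\ge 1$ be integers. A vector $\mathfrak{c}=(c_1,\ldots,c_d)\in\mathbb{N}^d$ is the clique vector of a $k$-connected chordal graph if and only if the vector $\mathfrak{b}=(b_1,\ldots,b_d)$ defined by the polynomial identity \[ \sum_{i=1}^d b_i x^{i-1}=\sum_{i=1}^d c_i (x-1)^{i-1} \] has all components positive, $d\ge k$, and $b_1=b_2=\cdots=b_k=1$.
   Context: All graphs are finite and simple. The clique vector $\mathfrak{c}(G)$ of a graph $G$ is $(c_1,\ldots,c_d)$, where $c_i$ is the number of cliques (complete subgraphs) of $G$ with exactly $i$ vertices and $d$ is the largest cardinality of a clique in $G$ (the clique number). A graph is $k$-connected if it has at least $k$ vertices and removing any set of fewer than $k$ vertices yields a connected graph; by convention every graph is $0$-connected. A graph is chordal if every cycle of length at least $4$ has a chord. *)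

theory Defs
  imports "HOL-Computational_Algebra.Polynomial"
begin

definition simple_graph :: "'a set \<Rightarrow> ('a \<Rightarrow> 'a \<Rightarrow> bool) \<Rightarrow> bool" where
  "simple_graph V E \<longleftrightarrow> finite V \<and> (\<forall>u v. E u v \<longrightarrow> u \<in> V \<and> v \<in> V)
     \<and> (\<forall>u v. E u v \<longrightarrow> E v u) \<and> (\<forall>v. \<not> E v v)"

definition is_clique :: "'a set \<Rightarrow> ('a \<Rightarrow> 'a \<Rightarrow> bool) \<Rightarrow> 'a set \<Rightarrow> bool" where
  "is_clique V E K \<longleftrightarrow> K \<subseteq> V \<and> (\<forall>u\<in>K. \<forall>v\<in>K. u \<noteq> v \<longrightarrow> E u v)"

definition clique_number :: "'a set \<Rightarrow> ('a \<Rightarrow> 'a \<Rightarrow> bool) \<Rightarrow> nat" where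
  "clique_number V E = Max {card K | K. is_clique V E K}"

text \<open>Clique vector (c_1,...,c_d) as a list: entry i-1 is c_i.\<close>
definition clique_vector :: "'a set \<Rightarrow> ('a \<Rightarrow> 'a \<Rightarrow> bool) \<Rightarrow> nat list" where
  "clique_vector V E =
     map (\<lambda>i. card {K. is_clique V E K \<and> card K = i}) [1..<clique_number V E + 1]"

definition connected_on :: "'a set \<Rightarrow> ('a \<Rightarrow> 'a \<Rightarrow> bool) \<Rightarrow> bool" where
  "connected_on W E \<longleftrightarrow> (\<forall>u\<in>W. \<forall>v\<in>W. \<exists>p. p \<noteq> [] \<and> hd p = u \<and> last p = v
      \<and> set p \<subseteq> W \<and> (\<forall>i. Suc i < length p \<longrightarrow> E (p ! i) (p ! Suc i)))"

definition k_connected :: "nat \<Rightarrow> 'a set \<Rightarrow> ('a \<Rightarrow> 'a \<Rightarrow> bool) \<Rightarrow> bool" where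
  "k_connected k V E \<longleftrightarrow> k \<le> card V \<and>
     (\<forall>S. S \<subseteq> V \<and> card S < k \<longrightarrow> connected_on (V - S) E)"

definition chordal :: "'a set \<Rightarrow> ('a \<Rightarrow> 'a \<Rightarrow> bool) \<Rightarrow> bool" where
  "chordal V E \<longleftrightarrow> (\<forall>cs. distinct cs \<and> set cs \<subseteq> V \<and> length cs \<ge> 4
      \<and> (\<forall>i<length cs. E (cs ! i) (cs ! ((i + 1) mod length cs)))
      \<longrightarrow> (\<exists>i<length cs. \<exists>j<length cs. E (cs ! i) (cs ! j)
             \<and> j \<noteq> (i + 1) mod length cs \<and> i \<noteq> (j + 1) mod length cs \<and> i \<noteq> j))"

text \<open>The polynomial \<Sum>_{i=1}^d c_i (x-1)^(i-1); b_j is its coefficient of x^(j-1).\<close>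
definition b_poly :: "nat list \<Rightarrow> int poly" where
  "b_poly c = (\<Sum>i=1..length c. smult (int (c ! (i - 1))) ([:-1, 1:] ^ (i - 1)))"

end

theory Submission
  imports Defs
begin

lemma b_poly_Nil: "b_poly [] = 0" by (simp add: b_poly_def)

lemma b_poly_Cons: "b_poly (a # c) = [:int a:] + [:-1,1:] * b_poly c"
proof -
  have "b_poly (a # c) = (\<Sum>i=1..Suc (length c). smult (int ((a#c) ! (i - 1))) ([:-1, 1:] ^ (i - 1)))"
    by (simp add: b_poly_def)
  also have "\<dots> = smult (int a) 1 + (\<Sum>i=Suc 1..Suc (length c). smult (int ((a#c) ! (i - 1))) ([:-1, 1:] ^ (i - 1)))"
    by (subst sum.atLeast_Suc_atMost) auto
  also have "(\<Sum>i=Suc 1..Suc (length c). smult (int ((a#c) ! (i - 1))) ([:-1, 1:] ^ (i - 1)))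
     = (\<Sum>i=1..length c. smult (int ((a#c) ! i)) ([:-1, 1:] ^ i))"
    by (subst sum.shift_bounds_cl_Suc_ivl) simp
  also have "\<dots> = [:-1,1:] * b_poly c"
    unfolding b_poly_def sum_distrib_left
    by (rule sum.cong) (auto simp: mult_smult_right power_Suc[symmetric] simp del: power_Suc intro!: arg_cong[where f="\<lambda>n. _ ^ n"])
  finally show ?thesis by (simp add: smult_one)
qed

lemma b_poly_inj: "length c = length c' \<Longrightarrow> b_poly c = b_poly c' \<Longrightarrow> c = c'"
proof (induction c arbitrary: c')
  case Nil then show ?case by simp
next
  case (Cons a c)
  then obtain a' d where c': "c' = a' # d" by (cases c') auto
  have e: "[:int a:] + [:-1,1:] * b_poly c = [:int a':] + [:-1,1:] * b_poly d"
    using Cons.prems by (simp add: c' b_poly_Cons)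
  from arg_cong[OF e, of "\<lambda>p. poly p 1"] have "a = a'" by simp
  with e have "[:-1,1:] * b_poly c = [:-1,1:] * b_poly d" by simp
  then have "b_poly c = b_poly d"
    using mult_left_cancel[of "[:-1,1::int:]" "b_poly c" "b_poly d"] by (simp del: mult_pCons_left)
  with Cons show ?case by (simp add: c' \<open>a = a'\<close>)
qed

lemma b_poly_coeff_high: "length c \<le> m \<Longrightarrow> coeff (b_poly c) m = 0"
proof (induction c arbitrary: m)
  case Nil then show ?case by (simp add: b_poly_Nil)
next
  case (Cons a c)
  then obtain m' where m: "m = Suc m'" by (cases m) auto
  have "[:-1,1::int:] * b_poly c = - b_poly c + pCons 0 (b_poly c)"
    by (simp add: mult_pCons_left)
  then show ?case using Cons by (simp add: b_poly_Cons m coeff_pCons)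
qed



definition nbr :: "('a \<Rightarrow> 'a \<Rightarrow> bool) \<Rightarrow> 'a \<Rightarrow> 'a set" where
  "nbr E v = {w. E v w}"
definition restr :: "('a \<Rightarrow> 'a \<Rightarrow> bool) \<Rightarrow> 'a set \<Rightarrow> 'a \<Rightarrow> 'a \<Rightarrow> bool" where
  "restr E W = (\<lambda>x y. E x y \<and> x \<in> W \<and> y \<in> W)"
definition cliques :: "'a set \<Rightarrow> ('a \<Rightarrow> 'a \<Rightarrow> bool) \<Rightarrow> 'a set set" where
  "cliques V E = {K. is_clique V E K \<and> K \<noteq> {}}"
definition cp :: "'a set \<Rightarrow> ('a \<Rightarrow> 'a \<Rightarrow> bool) \<Rightarrow> int poly" where
  "cp V E = (\<Sum>K\<in>cliques V E. [:-1,1:] ^ (card K - 1))"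

lemma simple_restr: "simple_graph V E \<Longrightarrow> W \<subseteq> V \<Longrightarrow> simple_graph W (restr E W)"
  unfolding simple_graph_def restr_def by (auto intro: finite_subset)

lemma finite_cliques: "simple_graph V E \<Longrightarrow> finite {K. is_clique V E K}"
  unfolding simple_graph_def is_clique_def
  by (rule finite_subset[of _ "Pow V"]) auto

lemma clique_card_le: "simple_graph V E \<Longrightarrow> is_clique V E K \<Longrightarrow> card K \<le> clique_number V E"
  unfolding clique_number_def
  by (rule Max_ge) (use finite_cliques[of V E] in auto)

lemma clique_number_attained: "simple_graph V E \<Longrightarrow> \<exists>K. is_clique V E K \<and> card K = clique_number V E"
proof -
  assume s: "simple_graph V E"
  have "finite {card K | K. is_clique V E K}" using finite_cliques[OF s] by simp
  moreover have "{card K | K. is_clique V E K} \<noteq> {}"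
    by (auto simp: is_clique_def)
  ultimately have "clique_number V E \<in> {card K | K. is_clique V E K}"
    unfolding clique_number_def by (rule Max_in)
  then show ?thesis by auto
qed

lemma b_poly_cv: assumes s: "simple_graph V E" shows "b_poly (clique_vector V E) = cp V E"
proof -
  let ?n = "clique_number V E"
  let ?f = "\<lambda>i::nat. [:-1,1::int:] ^ (i - 1)"
  have fin: "finite (cliques V E)" using finite_cliques[OF s] unfolding cliques_def by (rule finite_subset[rotated]) auto
  have fv: "finite V" using s by (simp add: simple_graph_def)
  have "cp V E = (\<Sum>i\<in>{1..?n}. \<Sum>K\<in>{K \<in> cliques V E. card K = i}. ?f (card K))"
    unfolding cp_def
  proof (rule sum.group[symmetric, OF fin])
    show "card ` cliques V E \<subseteq> {1..?n}"
    proof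
      fix x assume "x \<in> card ` cliques V E"
      then obtain K where K: "is_clique V E K" "K \<noteq> {}" "x = card K" by (auto simp: cliques_def)
      have "finite K" using K(1) fv by (auto simp: is_clique_def intro: finite_subset)
      then show "x \<in> {1..?n}" using K clique_card_le[OF s K(1)] by (auto simp: card_gt_0_iff Suc_le_eq)
    qed
  qed simp
  also have "\<dots> = (\<Sum>i\<in>{1..?n}. smult (int (card {K. is_clique V E K \<and> card K = i})) (?f i))"
  proof (rule sum.cong[OF refl])
    fix i assume i: "i \<in> {1..?n}"
    have eq: "{K \<in> cliques V E. card K = i} = {K. is_clique V E K \<and> card K = i}"
      using i by (auto simp: cliques_def)
    show "(\<Sum>K\<in>{K \<in> cliques V E. card K = i}. ?f (card K)) = smult (int (card {K. is_clique V E K \<and> card K = i})) (?f i)"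
      unfolding eq by (simp add: of_nat_mult_conv_smult)
  qed
  also have "\<dots> = b_poly (clique_vector V E)"
    unfolding b_poly_def clique_vector_def
    by (rule sum.cong) (auto simp del: upt_Suc)
  finally show ?thesis by simp
qed

lemma sum_Pow_power: "finite A \<Longrightarrow> (\<Sum>T\<in>Pow A. (y::'b::comm_semiring_1) ^ card T) = (y + 1) ^ card A"
proof (induction A rule: finite_induct)
  case empty then show ?case by simp
next
  case (insert a A)
  have aA: "a \<notin> A" by fact
  have inj: "inj_on (insert a) (Pow A)"
  proof (rule inj_onI)
    fix x y assume "x \<in> Pow A" "y \<in> Pow A" "insert a x = insert a y"
    then show "x = y" using aA by (metis Pow_iff insert_ident subset_iff)
  qed
  have dis: "Pow A \<inter> insert a ` Pow A = {}" using aA by auto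
  have "(\<Sum>T\<in>Pow (insert a A). y ^ card T) = (\<Sum>T\<in>Pow A. y ^ card T) + (\<Sum>T\<in>insert a ` Pow A. y ^ card T)"
    unfolding Pow_insert using insert(1) dis by (intro sum.union_disjoint) auto
  also have "(\<Sum>T\<in>insert a ` Pow A. y ^ card T) = (\<Sum>T\<in>Pow A. y ^ card (insert a T))"
    by (rule sum.reindex[OF inj, unfolded comp_def])
  also have "\<dots> = (\<Sum>T\<in>Pow A. y * y ^ card T)"
  proof (rule sum.cong[OF refl])
    fix T assume "T \<in> Pow A"
    then have "finite T" "a \<notin> T" using insert(1) aA by (auto intro: finite_subset)
    then show "y ^ card (insert a T) = y * y ^ card T" by simp
  qed
  finally show ?case using insert by (simp add: sum_distrib_left[symmetric] algebra_simps)
qed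

lemma cliques_remove:
  assumes s: "simple_graph V E" and v: "v \<in> V" and sv: "is_clique V E (nbr E v)"
  shows "cliques V E = cliques (V - {v}) (restr E (V - {v})) \<union> insert v ` Pow (nbr E v)"
proof (intro equalityI subsetI)
  fix K assume K: "K \<in> cliques V E"
  then have KV: "K \<subseteq> V" and Ke: "\<And>x y. x \<in> K \<Longrightarrow> y \<in> K \<Longrightarrow> x \<noteq> y \<Longrightarrow> E x y" and Kn: "K \<noteq> {}"
    by (auto simp: cliques_def is_clique_def)
  show "K \<in> cliques (V - {v}) (restr E (V - {v})) \<union> insert v ` Pow (nbr E v)"
  proof (cases "v \<in> K")
    case True
    have "K - {v} \<subseteq> nbr E v" using Ke True by (auto simp: nbr_def)
    moreover have "K = insert v (K - {v})" using True by auto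
    ultimately show ?thesis by blast
  next
    case False
    have "is_clique (V - {v}) (restr E (V - {v})) K"
      unfolding is_clique_def restr_def using KV Ke False by blast
    then show ?thesis using Kn by (simp add: cliques_def)
  qed
next
  fix K assume K: "K \<in> cliques (V - {v}) (restr E (V - {v})) \<union> insert v ` Pow (nbr E v)"
  show "K \<in> cliques V E"
  proof (cases "K \<in> cliques (V - {v}) (restr E (V - {v}))")
    case True
    then show ?thesis unfolding cliques_def is_clique_def restr_def by blast
  next
    case False
    then obtain T where T: "T \<subseteq> nbr E v" "K = insert v T" using K by auto
    have sym: "\<And>x y. E x y \<Longrightarrow> E y x" using s by (simp add: simple_graph_def)
    have TV: "T \<subseteq> V" "\<And>x y. x \<in> T \<Longrightarrow> y \<in> T \<Longrightarrow> x \<noteq> y \<Longrightarrow> E x y" using T(1) sv by (auto simp: is_clique_def)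
    have "K \<subseteq> V" using T TV v by auto
    moreover have "\<forall>x\<in>K. \<forall>y\<in>K. x \<noteq> y \<longrightarrow> E x y"
      using T TV(2) sym unfolding nbr_def by blast
    ultimately show ?thesis using T by (auto simp: cliques_def is_clique_def)
  qed
qed

lemma cp_remove:
  assumes s: "simple_graph V E" and v: "v \<in> V" and sv: "is_clique V E (nbr E v)"
  shows "cp V E = cp (V - {v}) (restr E (V - {v})) + monom 1 (card (nbr E v))"
proof -
  have fv: "finite V" using s by (simp add: simple_graph_def)
  have nv: "v \<notin> nbr E v" using s by (simp add: simple_graph_def nbr_def)
  have nV: "nbr E v \<subseteq> V" using sv by (simp add: is_clique_def)
  have fN: "finite (nbr E v)" using nV fv by (rule finite_subset)
  have fin: "finite (cliques V E)" using finite_cliques[OF s] unfolding cliques_def by (rule finite_subset[rotated]) auto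
  have inj: "inj_on (insert v) (Pow (nbr E v))" using nv by (auto simp: inj_on_def)
  have dis: "cliques (V - {v}) (restr E (V - {v})) \<inter> insert v ` Pow (nbr E v) = {}"
    by (auto simp: cliques_def is_clique_def)
  have "cp V E = cp (V - {v}) (restr E (V - {v})) + (\<Sum>K\<in>insert v ` Pow (nbr E v). [:-1,1:] ^ (card K - 1))"
    unfolding cp_def cliques_remove[OF assms]
  proof (rule sum.union_disjoint)
    show "finite (cliques (V - {v}) (restr E (V - {v})))"
      using fin cliques_remove[OF assms] by (metis finite_Un)
    show "finite (insert v ` Pow (nbr E v))" using fN by simp
  qed (rule dis)
  also have "(\<Sum>K\<in>insert v ` Pow (nbr E v). [:-1,1::int:] ^ (card K - 1)) = (\<Sum>T\<in>Pow (nbr E v). [:-1,1::int:] ^ card T)"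
    unfolding sum.reindex[OF inj, unfolded comp_def]
  proof (rule sum.cong[OF refl])
    fix T assume "T \<in> Pow (nbr E v)"
    then have "finite T" "v \<notin> T" using fN nv by (auto intro: finite_subset)
    then show "[:-1,1::int:] ^ (card (insert v T) - 1) = [:-1,1:] ^ card T" by simp
  qed
  also have "\<dots> = monom 1 (card (nbr E v))"
  proof -
    have "[:-1,1::int:] + 1 = [:0,1:]" by (simp add: one_pCons)
    then show ?thesis by (simp add: sum_Pow_power[OF fN] monom_altdef)
  qed
  finally show ?thesis .
qed

lemma cp_complete:
  "simple_graph V E \<Longrightarrow> is_clique V E V \<Longrightarrow> cp V E = (\<Sum>j<card V. monom 1 j)"
proof (induction "card V" arbitrary: V E)
  case 0
  then have "V = {}" by (simp add: simple_graph_def)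
  then have "cliques V E = {}" by (auto simp: cliques_def is_clique_def)
  then show ?case using \<open>V = {}\<close> by (simp add: cp_def)
next
  case (Suc n)
  have "V \<noteq> {}" using Suc.hyps(2) by (metis card.empty nat.distinct(1))
  then obtain v where v: "v \<in> V" by blast
  have fv: "finite V" using Suc.prems(1) by (simp add: simple_graph_def)
  have nb: "nbr E v = V - {v}"
  proof
    show "nbr E v \<subseteq> V - {v}" using Suc.prems(1) unfolding simple_graph_def nbr_def by blast
    show "V - {v} \<subseteq> nbr E v" using Suc.prems(2) v by (auto simp: is_clique_def nbr_def)
  qed
  have sv: "is_clique V E (nbr E v)" using Suc.prems(2) unfolding nb is_clique_def by blast
  have s': "simple_graph (V - {v}) (restr E (V - {v}))" using simple_restr[OF Suc.prems(1)] by auto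
  have c': "is_clique (V - {v}) (restr E (V - {v})) (V - {v})" using Suc.prems(2) unfolding is_clique_def restr_def by blast
  have cV: "card (V - {v}) = n" using Suc.hyps(2) v fv by simp
  have "cp V E = cp (V - {v}) (restr E (V - {v})) + monom 1 (card (nbr E v))"
    by (rule cp_remove[OF Suc.prems(1) v sv])
  also have "\<dots> = (\<Sum>j<n. monom 1 j) + monom 1 n"
    using Suc.hyps(1)[OF cV[symmetric] s' c'] cV nb by simp
  finally show ?case by (simp add: Suc.hyps(2)[symmetric])
qed



definition walk :: "('a \<Rightarrow> 'a \<Rightarrow> bool) \<Rightarrow> 'a set \<Rightarrow> 'a list \<Rightarrow> 'a \<Rightarrow> 'a \<Rightarrow> bool" where
  "walk E W p a b \<longleftrightarrow> p \<noteq> [] \<and> hd p = a \<and> last p = b \<and> set p \<subseteq> W \<and> successively E p"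

lemma connected_on_walk: "connected_on W E \<longleftrightarrow> (\<forall>u\<in>W. \<forall>v\<in>W. \<exists>p. walk E W p u v)"
  unfolding connected_on_def walk_def successively_conv_nth by blast

lemma rt_walk: "(restr E W)\<^sup>*\<^sup>* a b \<Longrightarrow> a \<in> W \<Longrightarrow> \<exists>p. walk E W p a b"
proof (induction rule: rtranclp_induct)
  case base
  have "walk E W [a] a a" using base by (simp add: walk_def)
  then show ?case by blast
next
  case (step y z)
  then obtain p where p: "walk E W p a y" by blast
  have "walk E W (p @ [z]) a z"
    using p step(2) by (auto simp: walk_def restr_def successively_append_iff)
  then show ?case by blast
qed

lemma walk_rt: "walk E W p a b \<Longrightarrow> (restr E W)\<^sup>*\<^sup>* a b"
proof (induction p arbitrary: a)
  case Nil then show ?case by (simp add: walk_def)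
next
  case (Cons x p)
  show ?case
  proof (cases "p = []")
    case True then show ?thesis using Cons.prems by (auto simp: walk_def)
  next
    case False
    have w: "walk E W p (hd p) b" using Cons.prems False by (auto simp: walk_def successively_Cons)
    have "restr E W a (hd p)" using Cons.prems False by (auto simp: walk_def successively_Cons restr_def)
    then show ?thesis using Cons.IH[OF w] by (rule converse_rtranclp_into_rtranclp)
  qed
qed

lemma walk_rev: "(\<And>x y. E x y \<Longrightarrow> E y x) \<Longrightarrow> walk E W p a b \<Longrightarrow> walk E W (rev p) b a"
  unfolding walk_def by (auto simp: hd_rev last_rev elim: successively_mono)

lemma walk_append: "walk E W p a b \<Longrightarrow> walk E W q b c \<Longrightarrow> walk E W (p @ tl q) a c"
proof -
  assume p: "walk E W p a b" and q: "walk E W q b c"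
  show ?thesis
  proof (cases "tl q = []")
    case True
    then have "q = [b]" using q by (cases q) (auto simp: walk_def)
    then show ?thesis using p q True by (simp add: walk_def)
  next
    case False
    obtain q' where q': "q = b # q'" using q by (cases q) (auto simp: walk_def)
    have "successively E q" using q by (simp add: walk_def)
    then have "E b (hd q')" "successively E q'" using False q' by (auto simp: successively_Cons)
    then show ?thesis using p q q' False
      by (auto simp: walk_def successively_append_iff list.set_sel(2))
  qed
qed

lemma walk_shortcut_dup: "walk E W (xs @ z # ys @ z # zs) a b \<Longrightarrow> walk E W (xs @ z # zs) a b"
  unfolding walk_def
  by (cases xs; cases zs) (auto simp: successively_append_iff successively_Cons hd_append split: if_splits)

lemma walk_shortcut_edge: "walk E W (xs @ z1 # ys @ z2 # zs) a b \<Longrightarrow> E z1 z2 \<Longrightarrow> walk E W (xs @ z1 # z2 # zs) a b"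
  unfolding walk_def
  by (cases xs; cases zs) (auto simp: successively_append_iff successively_Cons hd_append split: if_splits)

lemma list_split2: "i < j \<Longrightarrow> j < length q \<Longrightarrow>
  q = take i q @ q ! i # take (j - Suc i) (drop (Suc i) q) @ q ! j # drop (Suc j) q"
proof -
  assume ij: "i < j" "j < length q"
  have "q = take i q @ drop i q" by simp
  also have "drop i q = q ! i # drop (Suc i) q" using ij by (simp add: Cons_nth_drop_Suc)
  also have "drop (Suc i) q = take (j - Suc i) (drop (Suc i) q) @ drop (j - Suc i) (drop (Suc i) q)"
    by (rule append_take_drop_id[symmetric])
  also have "drop (j - Suc i) (drop (Suc i) q) = drop j q" using ij by simp
  also have "drop j q = q ! j # drop (Suc j) q" using ij by (simp add: Cons_nth_drop_Suc)
  finally show ?thesis .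
qed

lemma induced_walk:
  assumes "walk E W p a b"
  shows "\<exists>q. walk E W q a b \<and> distinct q \<and> (\<forall>i j. Suc i < j \<longrightarrow> j < length q \<longrightarrow> \<not> E (q ! i) (q ! j))"
proof -
  obtain q where q: "walk E W q a b" and qmin: "\<And>q'. walk E W q' a b \<Longrightarrow> length q \<le> length q'"
    using ex_has_least_nat[of "\<lambda>q. walk E W q a b" p length] assms by blast
  have "distinct q"
  proof (rule ccontr)
    assume "\<not> distinct q"
    then obtain i j where ij: "i < j" "j < length q" "q ! i = q ! j"
      by (metis distinct_conv_nth linorder_neqE_nat)
    let ?xs = "take i q" and ?ys = "take (j - Suc i) (drop (Suc i) q)" and ?zs = "drop (Suc j) q"
    have "walk E W (?xs @ q ! i # ?ys @ q ! i # ?zs) a b"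
      using q list_split2[OF ij(1,2)] ij(3) by simp
    then have "walk E W (?xs @ q ! i # ?zs) a b" by (rule walk_shortcut_dup)
    moreover have "length (?xs @ q ! i # ?zs) < length q" using ij by simp
    ultimately show False using qmin by fastforce
  qed
  moreover have "\<forall>i j. Suc i < j \<longrightarrow> j < length q \<longrightarrow> \<not> E (q ! i) (q ! j)"
  proof (intro allI impI notI)
    fix i j assume ij: "Suc i < j" "j < length q" "E (q ! i) (q ! j)"
    let ?xs = "take i q" and ?ys = "take (j - Suc i) (drop (Suc i) q)" and ?zs = "drop (Suc j) q"
    have "walk E W (?xs @ q ! i # ?ys @ q ! j # ?zs) a b"
      using q list_split2[of i j q] ij by simp
    then have "walk E W (?xs @ q ! i # q ! j # ?zs) a b" using ij(3) by (rule walk_shortcut_edge)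
    moreover have "length (?xs @ q ! i # q ! j # ?zs) < length q" using ij by simp
    ultimately show False using qmin by fastforce
  qed
  ultimately show ?thesis using q by blast
qed



lemma chordal_restr: "chordal V E \<Longrightarrow> W \<subseteq> V \<Longrightarrow> chordal W (restr E W)"
  unfolding chordal_def
proof (intro allI impI)
  fix cs
  assume ch: "\<forall>cs. distinct cs \<and> set cs \<subseteq> V \<and> 4 \<le> length cs \<and>
               (\<forall>i<length cs. E (cs ! i) (cs ! ((i + 1) mod length cs))) \<longrightarrow>
               (\<exists>i<length cs. \<exists>j<length cs. E (cs ! i) (cs ! j) \<and> j \<noteq> (i + 1) mod length cs \<and> i \<noteq> (j + 1) mod length cs \<and> i \<noteq> j)"
    and W: "W \<subseteq> V"
    and cs: "distinct cs \<and> set cs \<subseteq> W \<and> 4 \<le> length cs \<and>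
       (\<forall>i<length cs. restr E W (cs ! i) (cs ! ((i + 1) mod length cs)))"
  have "\<exists>i<length cs. \<exists>j<length cs. E (cs ! i) (cs ! j) \<and> j \<noteq> (i + 1) mod length cs \<and> i \<noteq> (j + 1) mod length cs \<and> i \<noteq> j"
    using ch cs W by (auto simp: restr_def)
  then obtain i j where "i<length cs" "j<length cs" "E (cs ! i) (cs ! j)" "j \<noteq> (i + 1) mod length cs" "i \<noteq> (j + 1) mod length cs" "i \<noteq> j"
    by blast
  moreover have "cs ! i \<in> W" "cs ! j \<in> W" using cs calculation(1,2) nth_mem by blast+
  ultimately show "\<exists>i<length cs. \<exists>j<length cs. restr E W (cs ! i) (cs ! j) \<and> j \<noteq> (i + 1) mod length cs \<and> i \<noteq> (j + 1) mod length cs \<and> i \<noteq> j"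
    unfolding restr_def by blast
qed

lemma clique_sep:
  assumes s: "simple_graph V E" and ch: "chordal V E" and u: "u \<in> V"
    and C: "C \<subseteq> V" "\<And>c. c \<in> C \<Longrightarrow> c \<noteq> u \<and> \<not> E u c"
    and Cc: "\<And>c1 c2. c1 \<in> C \<Longrightarrow> c2 \<in> C \<Longrightarrow> \<exists>p. walk E C p c1 c2"
    and x: "E u x" "x \<notin> C" "cx \<in> C" "E x cx"
    and y: "E u y" "y \<notin> C" "cy \<in> C" "E cy y"
    and xy: "x \<noteq> y"
  shows "E x y"
proof (rule ccontr)
  assume nxy: "\<not> E x y"
  have sym: "\<And>a b. E a b \<Longrightarrow> E b a" and irr: "\<And>a. \<not> E a a" and inV: "\<And>a b. E a b \<Longrightarrow> a \<in> V \<and> b \<in> V"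
    using s by (auto simp: simple_graph_def)
  let ?W = "insert x (insert y C)"
  obtain pc where pc: "walk E C pc cx cy" using Cc x(3) y(3) by blast
  have w0: "walk E ?W (x # pc @ [y]) x y"
    using pc x y by (cases pc) (auto simp: walk_def successively_append_iff successively_Cons hd_append split: if_splits)
  obtain q where q: "walk E ?W q x y" "distinct q"
     and ind: "\<And>i j. Suc i < j \<Longrightarrow> j < length q \<Longrightarrow> \<not> E (q ! i) (q ! j)"
    using induced_walk[OF w0] by blast
  have qne: "q \<noteq> []" and q0: "q ! 0 = x" and ql: "q ! (length q - 1) = y" and qW: "set q \<subseteq> ?W"
    and qs: "successively E q"
    using q by (auto simp: walk_def hd_conv_nth last_conv_nth)
  have l2: "length q \<noteq> 1" using q0 ql xy by (metis diff_self_eq_0)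
  have l3: "length q \<ge> 3"
  proof (rule ccontr)
    assume "\<not> 3 \<le> length q"
    moreover have "length q \<noteq> 0" using qne by simp
    ultimately have "length q = 2" using l2 by linarith
    then show False using successively_nth[OF qs, of 0] q0 ql nxy by simp
  qed
  have interior: "q ! i \<in> C" if "0 < i" "i < length q - 1" for i
  proof -
    have "i < length q" using that by simp
    then have "q ! i \<in> ?W" using qW nth_mem[of i q] by blast
    moreover have "q ! i \<noteq> q ! 0" using q(2) that by (subst nth_eq_iff_index_eq) auto
    moreover have "q ! i \<noteq> q ! (length q - 1)" using q(2) that by (subst nth_eq_iff_index_eq) auto
    ultimately show ?thesis using q0 ql by auto
  qed
  let ?cs = "u # q"
  let ?n = "length ?cs"
  have ux: "u \<noteq> x" "u \<noteq> y" using x(1) y(1) irr by auto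
  have uq: "u \<notin> set q"
  proof
    assume "u \<in> set q"
    then have "u \<in> ?W" using qW by auto
    then show False using ux C(2) by auto
  qed
  have prem: "distinct ?cs \<and> set ?cs \<subseteq> V \<and> 4 \<le> length ?cs \<and>
       (\<forall>i<length ?cs. E (?cs ! i) (?cs ! ((i + 1) mod length ?cs)))"
  proof (intro conjI allI impI)
    show "distinct ?cs" using uq q(2) by simp
    show "set ?cs \<subseteq> V" using u qW C(1) inV x(1) y(1) by auto
    show "4 \<le> length ?cs" using l3 by simp
    fix i assume i: "i < length ?cs"
    show "E (?cs ! i) (?cs ! ((i + 1) mod length ?cs))"
    proof (cases "i = 0")
      case True then show ?thesis using x(1) q0 l3 qne by simp
    next
      case False
      show ?thesis
      proof (cases "i = length q")
        case True
        then show ?thesis using ql sym[OF y(1)] False by simp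
      next
        case False2: False
        then have "(i + 1) mod length ?cs = i + 1" using i by simp
        moreover have "E (q ! (i - 1)) (q ! i)" using successively_nth[OF qs, of "i - 1"] False False2 i by simp
        ultimately show ?thesis using False by (cases i) auto
      qed
    qed
  qed
  then obtain i j where ij: "i < ?n" "j < ?n" "E (?cs ! i) (?cs ! j)" "j \<noteq> (i + 1) mod ?n" "i \<noteq> (j + 1) mod ?n" "i \<noteq> j"
    using ch unfolding chordal_def by blast
  have nm: "(a + 1) mod ?n = a + 1" if "a + 1 < ?n" for a using that by simp
  have nl: "(length q + 1) mod ?n = 0" by simp
  have u_case: False if "a < ?n" "a \<noteq> 0" "E u (?cs ! a)" "a \<noteq> 1" "a \<noteq> length q" for a
  proof -
    have "?cs ! a = q ! (a - 1)" using that by (cases a) auto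
    moreover have "q ! (a - 1) \<in> C" using that by (intro interior) auto
    ultimately show False using that C(2) by auto
  qed
  show False
  proof (cases "i = 0")
    case True
    then have "j \<noteq> 1" using ij(4) l3 qne by simp
    moreover have "j \<noteq> length q" using ij(5) True nl by auto
    ultimately show False using u_case[of j] ij True by simp
  next
    case i0: False
    show False
    proof (cases "j = 0")
      case True
      then have "i \<noteq> 1" using ij(5) l3 qne by simp
      moreover have "i \<noteq> length q" using ij(4) True nl by auto
      ultimately show False using u_case[of i] ij True sym by simp
    next
      case j0: False
      have e: "E (q ! (i - 1)) (q ! (j - 1))" using ij(3) i0 j0 by (cases i; cases j) auto
      show False
      proof (cases "i < j")
        case True
        then have "j \<noteq> i + 1" using ij(4) nm ij(2) by auto
        then have "Suc (i - 1) < j - 1" using True i0 by auto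
        moreover have "j - 1 < length q" using ij(2) j0 by simp
        ultimately show False using ind[of "i - 1" "j - 1"] e by blast
      next
        case False
        then have "j < i" using ij(6) by simp
        then have "i \<noteq> j + 1" using ij(5) nm ij(1) by auto
        then have "Suc (j - 1) < i - 1" using \<open>j < i\<close> j0 by auto
        moreover have "i - 1 < length q" using ij(1) i0 by simp
        ultimately show False using ind[of "j - 1" "i - 1"] sym[OF e] by blast
      qed
    qed
  qed
qed



lemma clique_restr_up: "is_clique W (restr E W) X \<Longrightarrow> W \<subseteq> V \<Longrightarrow> is_clique V E X"
  unfolding is_clique_def restr_def by blast

lemma simplicial_exists:
  "simple_graph V E \<Longrightarrow> chordal V E \<Longrightarrow> is_clique V E K \<Longrightarrow> K \<noteq> V \<Longrightarrow> \<exists>v\<in>V - K. is_clique V E (nbr E v)"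
proof (induction "card V" arbitrary: V E K rule: less_induct)
  case less
  note s = less.prems(1) and ch = less.prems(2) and K = less.prems(3) and KV = less.prems(4)
  have sym: "\<And>a b. E a b \<Longrightarrow> E b a" and irr: "\<And>a. \<not> E a a" and inV: "\<And>a b. E a b \<Longrightarrow> a \<in> V \<and> b \<in> V"
    and fV: "finite V"
    using s by (auto simp: simple_graph_def)
  have KsV: "K \<subseteq> V" using K by (simp add: is_clique_def)
  show ?case
  proof (cases "\<exists>w. K = {} \<and> V = {w}")
    case True
    then obtain w where w: "K = {}" "V = {w}" by blast
    have "nbr E w = {}" using w inV irr by (auto simp: nbr_def)
    then show ?thesis using w by (auto simp: is_clique_def)
  next
    case nsing: False
  obtain u where u: "u \<in> V" "K \<subseteq> insert u (nbr E u)" "K - {u} \<noteq> V - {u}"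
  proof (cases "K = {}")
    case True
    then obtain w where w: "w \<in> V" using KV by blast
    then show ?thesis using that[of w] w \<open>K = {}\<close> nsing by auto
  next
    case False
    then obtain w where w: "w \<in> K" by blast
    have "K \<subseteq> insert w (nbr E w)" using K w by (auto simp: is_clique_def nbr_def)
    moreover have "K - {w} \<noteq> V - {w}" using KV KsV w by auto
    ultimately show ?thesis using that[of w] w KsV by auto
  qed
  show ?thesis
  proof (cases "V = insert u (nbr E u)")
    case univ: True
    let ?V = "V - {u}" and ?E = "restr E (V - {u})"
    have s': "simple_graph ?V ?E" using simple_restr[OF s] by auto
    have ch': "chordal ?V ?E" using chordal_restr[OF ch] by auto
    have K': "is_clique ?V ?E (K - {u})" using K unfolding is_clique_def restr_def by blast
    have cV: "card ?V < card V" by (rule card_Diff1_less[OF fV u(1)])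
    obtain v where v: "v \<in> ?V - (K - {u})" "is_clique ?V ?E (nbr ?E v)"
      using less.hyps[OF cV s' ch' K' u(3)] by blast
    have nv: "nbr E v = insert u (nbr ?E v)"
    proof
      show "nbr E v \<subseteq> insert u (nbr ?E v)" using v(1) inV by (auto simp: nbr_def restr_def)
      have "E u v" using univ v(1) by (auto simp: nbr_def)
      then show "insert u (nbr ?E v) \<subseteq> nbr E v" using sym by (auto simp: nbr_def restr_def)
    qed
    have "is_clique V E (nbr E v)"
      unfolding is_clique_def
    proof (intro conjI ballI impI)
      show "nbr E v \<subseteq> V" using inV by (auto simp: nbr_def)
      fix a b assume ab: "a \<in> nbr E v" "b \<in> nbr E v" "a \<noteq> b"
      have uall: "\<And>z. z \<in> V \<Longrightarrow> z \<noteq> u \<Longrightarrow> E u z" using univ by (auto simp: nbr_def)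
      show "E a b"
      proof (cases "a = u")
        case True then show ?thesis using ab uall inV by (auto simp: nbr_def)
      next
        case False
        show ?thesis
        proof (cases "b = u")
          case True then show ?thesis using ab uall inV sym by (auto simp: nbr_def)
        next
          case False
          then have "a \<in> nbr ?E v" "b \<in> nbr ?E v" using ab \<open>a \<noteq> u\<close> nv by auto
          then have "?E a b" using v(2) ab(3) by (auto simp: is_clique_def)
          then show ?thesis by (simp add: restr_def)
        qed
      qed
    qed
    moreover have "v \<in> V - K" using v(1) by auto
    ultimately show ?thesis by blast
  next
    case False
    then obtain c0 where c0: "c0 \<in> V" "c0 \<noteq> u" "\<not> E u c0"
      using u(1) inV by (auto simp: nbr_def)
    define W0 where "W0 = V - insert u (nbr E u)"
    define C where "C = {c. (restr E W0)\<^sup>*\<^sup>* c0 c}"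
    have c0W: "c0 \<in> W0" using c0 by (auto simp: W0_def nbr_def)
    have CW: "C \<subseteq> W0"
    proof
      fix c assume "c \<in> C"
      then have "(restr E W0)\<^sup>*\<^sup>* c0 c" by (simp add: C_def)
      then show "c \<in> W0" using c0W by (induction rule: rtranclp_induct) (auto simp: restr_def)
    qed
    have c0C: "c0 \<in> C" by (simp add: C_def)
    have Cclosed: "z \<in> C" if "c \<in> C" "z \<in> W0" "E c z" for c z
    proof -
      have "restr E W0 c z" using that CW by (auto simp: restr_def)
      then show ?thesis using that(1) by (auto simp: C_def)
    qed
    have Crt: "(restr E C)\<^sup>*\<^sup>* c0 c" if "c \<in> C" for c
    proof -
      have "(restr E W0)\<^sup>*\<^sup>* c0 c" using that by (simp add: C_def)
      then show ?thesis
      proof (induction rule: rtranclp_induct)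
        case base then show ?case by simp
      next
        case (step y z)
        have "y \<in> C" "z \<in> C" using step(1,2) by (auto simp: C_def restr_def intro: rtranclp.rtrancl_into_rtrancl)
        then have "restr E C y z" using step(2) by (simp add: restr_def)
        then show ?case using step(3) by (metis rtranclp.rtrancl_into_rtrancl)
      qed
    qed
    have Cc: "\<exists>p. walk E C p c1 c2" if cc: "c1 \<in> C" "c2 \<in> C" for c1 c2
    proof -
      obtain p1 where p1: "walk E C p1 c0 c1" using rt_walk[OF Crt[OF cc(1)] c0C] by blast
      obtain p2 where p2: "walk E C p2 c0 c2" using rt_walk[OF Crt[OF cc(2)] c0C] by blast
      have "walk E C (rev p1 @ tl p2) c1 c2" using walk_append[OF walk_rev[OF sym p1] p2] by blast
      then show ?thesis by blast
    qed
    define NC where "NC = {z \<in> V - C. \<exists>c\<in>C. E c z}"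
    have NCu: "E u z" if zN: "z \<in> NC" for z
    proof -
      obtain c where c: "c \<in> C" "E c z" "z \<notin> C" "z \<in> V" using zN by (auto simp: NC_def)
      have "z \<notin> W0" using c Cclosed by blast
      moreover have "z \<noteq> u" using c CW sym by (auto simp: W0_def nbr_def)
      ultimately show ?thesis using c by (auto simp: W0_def nbr_def)
    qed
    have Cu: "c \<noteq> u \<and> \<not> E u c" if "c \<in> C" for c using that CW by (auto simp: W0_def nbr_def)
    let ?V = "C \<union> NC" and ?E = "restr E (C \<union> NC)"
    have VV: "?V \<subseteq> V" using CW by (auto simp: W0_def NC_def)
    have uV: "u \<notin> ?V" using Cu NCu irr by blast
    have "?V \<subset> V" using VV uV u(1) by blast
    then have cV: "card ?V < card V" using fV by (rule psubset_card_mono[rotated])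
    have s': "simple_graph ?V ?E" using simple_restr[OF s VV] .
    have ch': "chordal ?V ?E" using chordal_restr[OF ch VV] .
    have NCcl: "is_clique ?V ?E NC"
      unfolding is_clique_def
    proof (intro conjI ballI impI)
      show "NC \<subseteq> ?V" by auto
      fix x y assume xy: "x \<in> NC" "y \<in> NC" "x \<noteq> y"
      obtain cx where cx: "cx \<in> C" "E cx x" "x \<notin> C" using xy(1) by (auto simp: NC_def)
      obtain cy where cy: "cy \<in> C" "E cy y" "y \<notin> C" using xy(2) by (auto simp: NC_def)
      have "E x y"
        by (rule clique_sep[OF s ch u(1), of C, OF _ Cu Cc NCu[OF xy(1)] cx(3) cx(1) sym[OF cx(2)] NCu[OF xy(2)] cy(3) cy(1) cy(2) xy(3)])
           (use CW W0_def in auto)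
      then show "?E x y" using xy by (simp add: restr_def)
    qed
    have NCV: "NC \<noteq> ?V" using c0C by (auto simp: NC_def)
    obtain v where v: "v \<in> ?V - NC" "is_clique ?V ?E (nbr ?E v)"
      using less.hyps[OF cV s' ch' NCcl NCV] by blast
    have vC: "v \<in> C" using v(1) by auto
    have "nbr E v \<subseteq> ?V"
    proof
      fix z assume "z \<in> nbr E v"
      then have "E v z" by (simp add: nbr_def)
      then show "z \<in> ?V" using vC inV by (auto simp: NC_def)
    qed
    then have "nbr E v = nbr ?E v" using vC by (auto simp: nbr_def restr_def)
    then have "is_clique V E (nbr E v)" using clique_restr_up[OF v(2) VV] by simp
    moreover have "v \<notin> K" using vC CW u(2) by (auto simp: W0_def)
    moreover have "v \<in> V" using vC VV by auto
    ultimately show ?thesis by blast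
  qed
  qed
qed



lemma walk_restr: "walk E W p a b \<Longrightarrow> W \<subseteq> X \<Longrightarrow> walk (restr E X) W p a b"
proof -
  assume w: "walk E W p a b" and WX: "W \<subseteq> X"
  have se: "successively E p" using w by (simp add: walk_def)
  have "successively (restr E X) p"
  proof (rule successively_mono[OF se])
    fix x y assume "x \<in> set p" "y \<in> set p" "E x y"
    then show "restr E X x y" using w WX unfolding walk_def restr_def by blast
  qed
  then show ?thesis using w by (simp add: walk_def)
qed

lemma connected_restr: "connected_on W E \<Longrightarrow> W \<subseteq> X \<Longrightarrow> connected_on W (restr E X)"
proof -
  assume c: "connected_on W E" and WX: "W \<subseteq> X"
  show ?thesis unfolding connected_on_walk
  proof (intro ballI)
    fix u v assume uv: "u \<in> W" "v \<in> W"
    obtain p where "walk E W p u v" using c uv unfolding connected_on_walk by meson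
    then show "\<exists>p. walk (restr E X) W p u v" using walk_restr[OF _ WX] by meson
  qed
qed

lemma connected_remove:
  assumes c: "connected_on U E" and sym: "\<And>a b. E a b \<Longrightarrow> E b a"
    and sv: "\<And>a b. E v a \<Longrightarrow> E v b \<Longrightarrow> a \<noteq> b \<Longrightarrow> E a b"
  shows "connected_on (U - {v}) E"
  unfolding connected_on_walk
proof (intro ballI)
  fix a b assume ab: "a \<in> U - {v}" "b \<in> U - {v}"
  have abU: "a \<in> U" "b \<in> U" using ab by auto
  obtain p where "walk E U p a b" using c abU unfolding connected_on_walk by meson
  from induced_walk[OF this] obtain q where q: "walk E U q a b" "distinct q" and ind: "\<And>i j. Suc i < j \<Longrightarrow> j < length q \<Longrightarrow> \<not> E (q ! i) (q ! j)"
    by blast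
  have "v \<notin> set q"
  proof
    assume "v \<in> set q"
    then obtain i where i: "i < length q" "q ! i = v" unfolding in_set_conv_nth by blast
    have qne: "q \<noteq> []" and q0: "q ! 0 = a" and ql: "q ! (length q - 1) = b" and qs: "successively E q"
      using q by (auto simp: walk_def hd_conv_nth last_conv_nth)
    have i0: "i \<noteq> 0"
    proof
      assume "i = 0" then show False using i(2) q0 ab(1) by simp
    qed
    have il: "i \<noteq> length q - 1"
    proof
      assume "i = length q - 1" then show False using i(2) ql ab(2) by simp
    qed
    have e1: "E v (q ! (i - 1))" using successively_nth[OF qs, of "i - 1"] i i0 sym by simp
    have e2: "E v (q ! (i + 1))" using successively_nth[OF qs, of i] i il by simp
    have ne: "q ! (i - 1) \<noteq> q ! (i + 1)" using q(2) i i0 il by (subst nth_eq_iff_index_eq) auto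
    have "E (q ! (i - 1)) (q ! (i + 1))" using sv[OF e1 e2 ne] .
    moreover have "\<not> E (q ! (i - 1)) (q ! (i + 1))" using ind[of "i - 1" "i + 1"] i i0 il by simp
    ultimately show False by simp
  qed
  then have "walk E (U - {v}) q a b" using q(1) by (auto simp: walk_def)
  then show "\<exists>p. walk E (U - {v}) p a b" by blast
qed

lemma cliques_self: "cliques V (restr E V) = cliques V E"
  unfolding cliques_def is_clique_def restr_def by blast

lemma restr_restr: "K \<subseteq> W \<Longrightarrow> restr (restr E W) K = restr E K"
  unfolding restr_def by auto

lemma elim:
  "simple_graph V E \<Longrightarrow> chordal V E \<Longrightarrow> k_connected k V E \<Longrightarrow> is_clique V E K \<Longrightarrow>
   (\<forall>K'. is_clique V E K' \<longrightarrow> card K' \<le> card K) \<Longrightarrow>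
   \<exists>s. cp V E = cp K (restr E K) + (\<Sum>v\<in>V - K. monom 1 (s v)) \<and> (\<forall>v\<in>V - K. k \<le> s v) \<and> k \<le> card K"
proof (induction "card (V - K)" arbitrary: V E rule: less_induct)
  case less
  note s = less.prems(1) and ch = less.prems(2) and kc = less.prems(3) and K = less.prems(4) and mx = less.prems(5)
  have sym: "\<And>a b. E a b \<Longrightarrow> E b a" and irr: "\<And>a. \<not> E a a" and inV: "\<And>a b. E a b \<Longrightarrow> a \<in> V \<and> b \<in> V"
    and fV: "finite V"
    using s by (auto simp: simple_graph_def)
  have KsV: "K \<subseteq> V" using K by (simp add: is_clique_def)
  show ?case
  proof (cases "K = V")
    case True
    have "cp V E = cp K (restr E K)" using True by (simp add: cp_def cliques_self)
    moreover have "k \<le> card K" using kc True by (simp add: k_connected_def)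
    ultimately show ?thesis using True by auto
  next
    case False
    obtain v where v: "v \<in> V - K" "is_clique V E (nbr E v)"
      using simplicial_exists[OF s ch K False] by blast
    have "\<exists>w\<in>V. w \<noteq> v \<and> \<not> E v w"
    proof (rule ccontr)
      assume "\<not> ?thesis"
      then have all: "\<And>w. w \<in> V \<Longrightarrow> w \<noteq> v \<Longrightarrow> E v w" by blast
      have "is_clique V E (insert v K)"
        using K v(1) all sym unfolding is_clique_def by auto
      then have "card (insert v K) \<le> card K" using mx by blast
      moreover have "finite K" using KsV fV by (rule finite_subset)
      ultimately show False using v(1) by simp
    qed
    then obtain w where w: "w \<in> V" "w \<noteq> v" "\<not> E v w" by blast
    have vnb: "v \<notin> nbr E v" using irr by (simp add: nbr_def)
    have nbV: "nbr E v \<subseteq> V - {v}" using inV vnb by (auto simp: nbr_def)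
    have deg: "k \<le> card (nbr E v)"
    proof (rule ccontr)
      assume "\<not> ?thesis"
      then have "card (nbr E v) < k" by simp
      then have "connected_on (V - nbr E v) E" using kc nbV by (auto simp: k_connected_def)
      moreover have "v \<in> V - nbr E v" "w \<in> V - nbr E v" using v(1) vnb w by (auto simp: nbr_def)
      ultimately obtain p where p: "walk E (V - nbr E v) p v w" unfolding connected_on_walk by blast
      have p0: "p ! 0 = v" and pl: "p ! (length p - 1) = w" and pne: "p \<noteq> []" and ps: "successively E p"
        and pS: "set p \<subseteq> V - nbr E v"
        using p by (auto simp: walk_def hd_conv_nth last_conv_nth)
      have "length p \<noteq> 1" using p0 pl w(2) by force
      then have l2: "1 < length p" using pne by (cases p) auto
      then have "E v (p ! 1)" using successively_nth[OF ps, of 0] p0 by simp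
      moreover have "p ! 1 \<in> set p" using l2 by simp
      ultimately show False using pS by (auto simp: nbr_def)
    qed
    let ?V = "V - {v}" and ?E = "restr E (V - {v})"
    have s': "simple_graph ?V ?E" using simple_restr[OF s] by auto
    have ch': "chordal ?V ?E" using chordal_restr[OF ch] by auto
    have kc': "k_connected k ?V ?E"
      unfolding k_connected_def
    proof (intro conjI allI impI)
      have "card (nbr E v) \<le> card ?V" using nbV fV by (intro card_mono) auto
      then show "k \<le> card ?V" using deg by simp
      fix S assume S: "S \<subseteq> ?V \<and> card S < k"
      then have "connected_on (V - S) E" using kc by (auto simp: k_connected_def)
      then have "connected_on (V - S - {v}) E"
        by (rule connected_remove[OF _ sym]) (use v(2) in \<open>auto simp: is_clique_def nbr_def\<close>)
      moreover have "V - S - {v} = ?V - S" by auto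
      ultimately show "connected_on (?V - S) ?E" by (metis connected_restr Diff_subset)
    qed
    have K': "is_clique ?V ?E K" using K v(1) unfolding is_clique_def restr_def by blast
    have mx': "\<forall>K'. is_clique ?V ?E K' \<longrightarrow> card K' \<le> card K"
      using mx clique_restr_up[of ?V E _ V] by blast
    have cV: "card (?V - K) < card (V - K)"
    proof -
      have "?V - K = (V - K) - {v}" by auto
      moreover have "finite (V - K)" using fV by simp
      ultimately show ?thesis using v(1) card_Diff1_less[of "V - K" v] by simp
    qed
    obtain s0 where s0: "cp ?V ?E = cp K (restr ?E K) + (\<Sum>v\<in>?V - K. monom 1 (s0 v))"
      "\<forall>v\<in>?V - K. k \<le> s0 v" "k \<le> card K"
      using less.hyps[OF cV s' ch' kc' K' mx'] by blast
    define s1 where "s1 = s0(v := card (nbr E v))"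
    have rr: "restr ?E K = restr E K" using KsV v(1) by (intro restr_restr) auto
    have fin: "finite (V - K)" using fV by simp
    have "(\<Sum>x\<in>V - K. monom 1 (s1 x)) = monom 1 (s1 v) + (\<Sum>x\<in>(V - K) - {v}. monom 1 (s1 x))"
      using v(1) fin by (simp add: sum.remove)
    also have "(\<Sum>x\<in>(V - K) - {v}. monom 1 (s1 x)) = (\<Sum>x\<in>?V - K. monom 1 (s0 x))"
      by (rule sum.cong) (auto simp: s1_def)
    finally have sm: "(\<Sum>x\<in>V - K. monom 1 (s1 x)) = monom 1 (card (nbr E v)) + (\<Sum>x\<in>?V - K. monom 1 (s0 x))"
      by (simp add: s1_def)
    have "cp V E = cp ?V ?E + monom 1 (card (nbr E v))"
      using cp_remove[OF s _ v(2)] v(1) by simp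
    then have "cp V E = cp K (restr E K) + (\<Sum>x\<in>V - K. monom 1 (s1 x))"
      using s0(1) rr unfolding sm by (simp add: algebra_simps)
    moreover have "\<forall>x\<in>V - K. k \<le> s1 x" using s0(2) deg by (auto simp: s1_def)
    ultimately show ?thesis using s0(3) by blast
  qed
qed



lemma length_cv: "length (clique_vector V E) = clique_number V E"
  by (simp add: clique_vector_def)

lemma coeff_monom_sum: "coeff (\<Sum>x\<in>A. monom (1::int) (f x)) m = (\<Sum>x\<in>A. if f x = m then 1 else 0)"
  by (simp add: coeff_sum coeff_monom)

lemma necessity:
  assumes s: "simple_graph V E" and kc: "k_connected k V E" and ch: "chordal V E"
    and cv: "clique_vector V E = c" and d: "length c = d" "d \<ge> 1"
  shows "(\<forall>j\<in>{1..d}. coeff (b_poly c) (j - 1) > 0) \<and> d \<ge> k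
          \<and> (\<forall>j\<in>{1..k}. coeff (b_poly c) (j - 1) = 1)"
proof -
  have bp: "b_poly c = cp V E" using b_poly_cv[OF s] cv by simp
  obtain K where K: "is_clique V E K" "card K = clique_number V E" using clique_number_attained[OF s] by blast
  have cK: "card K = d" using K(2) length_cv[of V E] cv d by simp
  have mx: "\<forall>K'. is_clique V E K' \<longrightarrow> card K' \<le> card K" using clique_card_le[OF s] K(2) by simp
  obtain sf where sf: "cp V E = cp K (restr E K) + (\<Sum>v\<in>V - K. monom 1 (sf v))"
    "\<forall>v\<in>V - K. k \<le> sf v" "k \<le> card K"
    using elim[OF s ch kc K(1) mx] by blast
  have KsV: "K \<subseteq> V" using K(1) by (simp add: is_clique_def)
  have cpK: "cp K (restr E K) = (\<Sum>j<card K. monom 1 j)"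
    by (rule cp_complete[OF simple_restr[OF s KsV]]) (use K(1) in \<open>auto simp: is_clique_def restr_def\<close>)
  have co: "coeff (b_poly c) m = (if m < d then 1 else 0) + (\<Sum>v\<in>V - K. if sf v = m then 1 else 0)" for m
  proof -
    have "coeff (\<Sum>j<d. monom (1::int) j) m = (\<Sum>j<d. if j = m then 1 else 0)"
      using coeff_monom_sum[of id "{..<d}" m] by simp
    also have "\<dots> = (if m < d then 1 else 0)" by (simp add: sum.delta)
    finally show ?thesis unfolding bp sf(1) cpK cK coeff_add coeff_monom_sum by simp
  qed
  have nn: "(\<Sum>v\<in>V - K. if sf v = m then 1 else 0) \<ge> (0::int)" for m by (rule sum_nonneg) auto
  have z: "(\<Sum>v\<in>V - K. if sf v = m then 1 else 0) = (0::int)" if "m < k" for m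
    using sf(2) that by (intro sum.neutral) force
  show ?thesis
  proof (intro conjI ballI)
    fix j assume j: "j \<in> {1..d}"
    then show "coeff (b_poly c) (j - 1) > 0" using co[of "j - 1"] nn[of "j - 1"] by auto
  next
    show "d \<ge> k" using sf(3) cK by simp
  next
    fix j assume j: "j \<in> {1..k}"
    then show "coeff (b_poly c) (j - 1) = 1" using co[of "j - 1"] z[of "j - 1"] sf(3) cK by auto
  qed
qed



definition GV :: "nat \<Rightarrow> nat list \<Rightarrow> nat set" where "GV d L = {0..<d + length L}"
definition GE :: "nat \<Rightarrow> nat list \<Rightarrow> nat \<Rightarrow> nat \<Rightarrow> bool" where
  "GE d L a b \<longleftrightarrow> (a < d \<and> b < d \<and> a \<noteq> b) \<or> (d \<le> a \<and> a < d + length L \<and> b < L ! (a - d))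
      \<or> (d \<le> b \<and> b < d + length L \<and> a < L ! (b - d))"

lemma cp_indep:
  "simple_graph V E \<Longrightarrow> is_clique V E K \<Longrightarrow> (\<forall>x\<in>V - K. nbr E x \<subseteq> K) \<Longrightarrow>
   cp V E = cp K (restr E K) + (\<Sum>x\<in>V - K. monom 1 (card (nbr E x)))"
proof (induction "card (V - K)" arbitrary: V E rule: less_induct)
  case less
  note s = less.prems(1) and K = less.prems(2) and nb = less.prems(3)
  have fV: "finite V" using s by (simp add: simple_graph_def)
  have KsV: "K \<subseteq> V" using K by (simp add: is_clique_def)
  show ?case
  proof (cases "K = V")
    case True
    then show ?thesis by (simp add: cp_def cliques_self)
  next
    case False
    then obtain v where v: "v \<in> V" "v \<notin> K" using KsV by blast
    have sv: "is_clique V E (nbr E v)" using K nb v unfolding is_clique_def by blast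
    let ?V = "V - {v}" and ?E = "restr E (V - {v})"
    have s': "simple_graph ?V ?E" using simple_restr[OF s] by auto
    have K': "is_clique ?V ?E K" using K v unfolding is_clique_def restr_def by blast
    have nbe: "nbr ?E x = nbr E x" if "x \<in> ?V - K" for x
    proof -
      have "nbr E x \<subseteq> ?V" using nb that v(2) KsV by blast
      then show ?thesis using that unfolding nbr_def restr_def by blast
    qed
    have nb': "\<forall>x\<in>?V - K. nbr ?E x \<subseteq> K" using nbe nb by auto
    have cV: "card (?V - K) < card (V - K)"
    proof -
      have "?V - K = (V - K) - {v}" by auto
      moreover have "finite (V - K)" using fV by simp
      ultimately show ?thesis using v card_Diff1_less[of "V - K" v] by simp
    qed
    have IH: "cp ?V ?E = cp K (restr ?E K) + (\<Sum>x\<in>?V - K. monom 1 (card (nbr ?E x)))"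
      by (rule less.hyps[OF cV s' K' nb'])
    have rr: "restr ?E K = restr E K" using KsV v by (intro restr_restr) auto
    have sc: "(\<Sum>x\<in>?V - K. monom 1 (card (nbr ?E x))) = (\<Sum>x\<in>?V - K. monom (1::int) (card (nbr E x)))"
      by (rule sum.cong) (simp_all add: nbe)
    have fin: "finite (V - K)" using fV by simp
    have "(\<Sum>x\<in>V - K. monom (1::int) (card (nbr E x))) = monom 1 (card (nbr E v)) + (\<Sum>x\<in>(V - K) - {v}. monom 1 (card (nbr E x)))"
      using v fin by (simp add: sum.remove)
    moreover have "(V - K) - {v} = ?V - K" by auto
    moreover have "cp V E = cp ?V ?E + monom 1 (card (nbr E v))"
      by (rule cp_remove[OF s v(1) sv])
    ultimately show ?thesis using IH rr sc by (simp add: algebra_simps)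
  qed
qed

lemma cyc_idx:
  assumes n: "4 \<le> (n::nat)" and i: "i < n"
  shows "\<exists>a<n. \<exists>b<n. (a + 1) mod n = i \<and> b = (i + 1) mod n \<and> b \<noteq> (a + 1) mod n \<and> a \<noteq> (b + 1) mod n \<and> a \<noteq> b"
proof (cases "i = 0")
  case True
  have "(n - 1 + 1) mod n = 0" using n by simp
  moreover have "(1 + 1) mod n = 2" using n by simp
  ultimately show ?thesis using True n by (intro exI[of _ "n - 1"] conjI exI[of _ 1]) auto
next
  case i0: False
  show ?thesis
  proof (cases "i = n - 1")
    case True
    have "(n - 2 + 1) mod n = n - 1" using n by simp
    moreover have "(i + 1) mod n = 0" using True n by simp
    ultimately show ?thesis using True n by (intro exI[of _ "n - 2"] conjI exI[of _ 0]) auto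
  next
    case False
    have a: "(i - 1 + 1) mod n = i" using i i0 by simp
    have b: "(i + 1) mod n = i + 1" using i False by simp
    have c: "i - 1 \<noteq> (i + 1 + 1) mod n"
    proof (cases "i + 2 < n")
      case True then show ?thesis by simp
    next
      case False
      then have "i + 2 = n" using i \<open>i \<noteq> n - 1\<close> by simp
      then show ?thesis using n by simp
    qed
    show ?thesis using a b c i i0 False by (intro exI[of _ "i - 1"] conjI exI[of _ "i + 1"]) auto
  qed
qed

locale cons =
  fixes d k :: nat and L :: "nat list"
  assumes kd: "k \<le> d" and Lb: "\<And>x. x \<in> set L \<Longrightarrow> k \<le> x \<and> x < d"
begin

abbreviation "V \<equiv> GV d L"
abbreviation "E \<equiv> GE d L"

lemma Lnth: "i < length L \<Longrightarrow> k \<le> L ! i \<and> L ! i < d" using Lb nth_mem by blast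

lemma Lx: "d \<le> a \<Longrightarrow> a < d + length L \<Longrightarrow> k \<le> L ! (a - d) \<and> L ! (a - d) < d"
  using Lnth[of "a - d"] by simp

lemma E_small: "E a b \<Longrightarrow> (a < d \<or> b < d) \<and> a < d + length L \<and> b < d + length L"
proof -
  assume e: "E a b"
  show ?thesis
  proof (cases "d \<le> a \<and> a < d + length L \<and> b < L ! (a - d)")
    case True then show ?thesis using Lx[of a] by auto
  next
    case False
    show ?thesis
    proof (cases "d \<le> b \<and> b < d + length L \<and> a < L ! (b - d)")
      case True then show ?thesis using Lx[of b] by auto
    next
      case False2: False
      then show ?thesis using e False by (auto simp: GE_def)
    qed
  qed
qed

lemma E_irr: "\<not> E v v"
proof
  assume "E v v"
  then have "v < d" using E_small by auto
  then show False using \<open>E v v\<close> by (auto simp: GE_def)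
qed

lemma E_sym: "E u v \<Longrightarrow> E v u" by (auto simp: GE_def)

lemma simple: "simple_graph V E"
  unfolding simple_graph_def using E_small E_irr E_sym by (auto simp: GV_def)

lemma nbr_X: "d \<le> x \<Longrightarrow> x < d + length L \<Longrightarrow> nbr E x = {0..<L ! (x - d)}"
proof -
  assume x: "d \<le> x" "x < d + length L"
  have "E x y \<longleftrightarrow> y < L ! (x - d)" for y
  proof
    assume "E x y"
    then have "y < d" using E_small[OF \<open>E x y\<close>] x by auto
    then show "y < L ! (x - d)" using \<open>E x y\<close> x by (auto simp: GE_def)
  qed (use x in \<open>auto simp: GE_def\<close>)

  then show ?thesis unfolding nbr_def by (simp add: set_eq_iff)
qed

lemma nbr_X_sub: "d \<le> x \<Longrightarrow> x < d + length L \<Longrightarrow> nbr E x \<subseteq> {0..<d}"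
proof -
  assume x: "d \<le> x" "x < d + length L"
  have "L ! (x - d) < d" using Lx[OF x] by simp
  then show ?thesis unfolding nbr_X[OF x] by auto
qed

lemma Kcl: "is_clique V E {0..<d}"
  unfolding is_clique_def GV_def GE_def by auto

lemma VK: "V - {0..<d} = {d..<d + length L}" by (auto simp: GV_def)

lemma cp_G: "cp V E = (\<Sum>j<d. monom 1 j) + (\<Sum>i<length L. monom 1 (L ! i))"
proof -
  have nb: "\<forall>x\<in>V - {0..<d}. nbr E x \<subseteq> {0..<d}" using nbr_X_sub unfolding VK by auto
  have "cp V E = cp {0..<d} (restr E {0..<d}) + (\<Sum>x\<in>V - {0..<d}. monom 1 (card (nbr E x)))"
    by (rule cp_indep[OF simple Kcl nb])
  also have "cp {0..<d} (restr E {0..<d}) = (\<Sum>j<card {0..<d}. monom 1 j)"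
    by (rule cp_complete[OF simple_restr[OF simple]]) (use Kcl in \<open>auto simp: is_clique_def restr_def GV_def\<close>)
  also have "(\<Sum>x\<in>V - {0..<d}. monom (1::int) (card (nbr E x))) = (\<Sum>x\<in>{d..<d + length L}. monom 1 (L ! (x - d)))"
    unfolding VK by (rule sum.cong) (auto simp: nbr_X)
  also have "\<dots> = (\<Sum>i<length L. monom 1 (L ! i))"
    by (subst sum.atLeastLessThan_shift_0) (simp add: lessThan_atLeast0 comp_def)
  finally show ?thesis by simp
qed

lemma clique_le: "is_clique V E T \<Longrightarrow> card T \<le> d"
proof -
  assume T: "is_clique V E T"
  show ?thesis
  proof (cases "T \<subseteq> {0..<d}")
    case True then show ?thesis using card_mono[of "{0..<d}" T] by simp
  next
    case False
    then obtain x where x: "x \<in> T" "\<not> x < d" by (meson atLeastLessThan_iff subsetI zero_le)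
    have TV: "T \<subseteq> V" using T by (simp add: is_clique_def)
    have xV: "x < d + length L" using TV x(1) unfolding GV_def by auto
    have xd: "d \<le> x" using x(2) by simp
    have "T - {x} \<subseteq> nbr E x"
    proof
      fix y assume "y \<in> T - {x}"
      then have "E x y" using T x(1) unfolding is_clique_def by auto
      then show "y \<in> nbr E x" by (simp add: nbr_def)
    qed
    then have "T - {x} \<subseteq> {0..<L ! (x - d)}" using nbr_X[OF xd xV] by simp
    then have "card (T - {x}) \<le> L ! (x - d)" using card_mono[of "{0..<L ! (x - d)}"] by fastforce
    moreover have "finite T" using T by (auto simp: is_clique_def GV_def intro: finite_subset)
    ultimately have "card T \<le> Suc (L ! (x - d))" using x(1) by (simp add: card_Diff_singleton)
    then show ?thesis using Lx[OF xd xV] by simp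
  qed
qed

lemma cn: "clique_number V E = d"
proof -
  obtain T where T: "is_clique V E T" "card T = clique_number V E" using clique_number_attained[OF simple] by blast
  have "d \<le> clique_number V E" using clique_card_le[OF simple Kcl] by simp
  then show ?thesis using clique_le[OF T(1)] T(2) by simp
qed

lemma nb_small: "d \<le> x \<Longrightarrow> x < d + length L \<Longrightarrow> E x y \<Longrightarrow> y < d"
  using nbr_X_sub[of x] by (auto simp: nbr_def)

lemma chordal_G: "chordal V E"
  unfolding chordal_def
proof (intro allI impI)
  fix cs assume cs: "distinct cs \<and> set cs \<subseteq> V \<and> 4 \<le> length cs \<and>
       (\<forall>i<length cs. E (cs ! i) (cs ! ((i + 1) mod length cs)))"
  let ?n = "length cs"
  have dist: "distinct cs" and sV: "set cs \<subseteq> V" and n4: "4 \<le> ?n"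
    and ed: "\<And>i. i < ?n \<Longrightarrow> E (cs ! i) (cs ! ((i + 1) mod ?n))" using cs by auto
  have inV: "cs ! i < d + length L" if "i < ?n" for i
    using sV nth_mem[OF that] by (auto simp: GV_def)
  show "\<exists>i<?n. \<exists>j<?n. E (cs ! i) (cs ! j) \<and> j \<noteq> (i + 1) mod ?n \<and> i \<noteq> (j + 1) mod ?n \<and> i \<noteq> j"
  proof (cases "\<exists>i<?n. d \<le> cs ! i")
    case True
    then obtain i where i: "i < ?n" "d \<le> cs ! i" by blast
    obtain a b where ab: "a < ?n" "b < ?n" "(a + 1) mod ?n = i" "b = (i + 1) mod ?n"
      "b \<noteq> (a + 1) mod ?n" "a \<noteq> (b + 1) mod ?n" "a \<noteq> b"
      using cyc_idx[OF n4 i(1)] by blast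
    have e1: "E (cs ! i) (cs ! a)" using ed[OF ab(1)] ab(3) E_sym by simp
    have e2: "E (cs ! i) (cs ! b)" using ed[OF i(1)] ab(4) by simp
    have "cs ! a < d" by (rule nb_small[OF i(2) inV[OF i(1)] e1])
    moreover have "cs ! b < d" by (rule nb_small[OF i(2) inV[OF i(1)] e2])
    moreover have "cs ! a \<noteq> cs ! b" using dist ab(1,2,7) by (simp add: nth_eq_iff_index_eq)
    ultimately have "E (cs ! a) (cs ! b)" by (simp add: GE_def)
    then show ?thesis using ab by blast
  next
    case False
    then have small: "\<And>i. i < ?n \<Longrightarrow> cs ! i < d" by auto
    have "0 < ?n" "2 < ?n" using n4 by auto
    then have "cs ! 0 \<noteq> cs ! 2" using dist by (simp add: nth_eq_iff_index_eq)
    moreover have "cs ! 0 < d" "cs ! 2 < d" using small \<open>0 < ?n\<close> \<open>2 < ?n\<close> by auto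
    ultimately have "E (cs ! 0) (cs ! 2)" by (simp add: GE_def)
    moreover have "(0 + 1) mod ?n = 1" "(2 + 1) mod ?n = 3" using n4 by auto
    ultimately show ?thesis using n4 by (intro exI[of _ 0] conjI exI[of _ 2]) auto
  qed
qed

lemma kconn: "k_connected k V E"
  unfolding k_connected_def
proof (intro conjI allI impI)
  show "k \<le> card V" using kd by (simp add: GV_def)
  fix S assume S: "S \<subseteq> V \<and> card S < k"
  let ?W = "V - S"
  let ?R = "restr E ?W"
  have fS: "finite S" using S by (auto simp: GV_def intro: finite_subset)
  obtain z0 where z0: "z0 < d" "z0 \<notin> S"
  proof (cases "{0..<d} \<subseteq> S")
    case True
    then have "d \<le> card S" using card_mono[OF fS True] by simp
    then show ?thesis using S kd by simp
  next
    case False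
    then obtain x where "x \<in> {0..<d}" "x \<notin> S" by blast
    then show ?thesis using that by simp
  qed
  have z0W: "z0 \<in> ?W" using z0 by (auto simp: GV_def)
  have hub: "?R\<^sup>*\<^sup>* z0 w \<and> ?R\<^sup>*\<^sup>* w z0" if w: "w \<in> ?W" for w
  proof (cases "w < d")
    case True
    show ?thesis
    proof (cases "w = z0")
      case True then show ?thesis by simp
    next
      case False
      then have "?R z0 w" "?R w z0" using z0W w \<open>w < d\<close> z0 by (auto simp: restr_def GE_def)
      then show ?thesis by (meson r_into_rtranclp)
    qed
  next
    case False
    then have wd: "d \<le> w" by simp
    have wl: "w < d + length L" using w by (auto simp: GV_def)
    have "\<not> {0..<L ! (w - d)} \<subseteq> S"
    proof
      assume sub: "{0..<L ! (w - d)} \<subseteq> S"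
      have "card {0..<L ! (w - d)} \<le> card S" by (rule card_mono[OF fS sub])
      then have "L ! (w - d) \<le> card S" by simp
      then show False using Lx[OF wd wl] S by simp
    qed
    then obtain y where y0: "y \<in> {0..<L ! (w - d)}" "y \<notin> S" by blast
    then have y: "y < L ! (w - d)" "y \<notin> S" by auto
    have yd: "y < d" using y Lx[OF wd wl] by simp
    have yW: "y \<in> ?W" using yd y by (auto simp: GV_def)
    have "?R y w" "?R w y" using y yW w wd wl by (auto simp: restr_def GE_def)
    moreover have "?R\<^sup>*\<^sup>* z0 y \<and> ?R\<^sup>*\<^sup>* y z0"
    proof (cases "y = z0")
      case True then show ?thesis by simp
    next
      case False
      then have "?R z0 y" "?R y z0" using z0W yW yd z0 by (auto simp: restr_def GE_def)
      then show ?thesis by (meson r_into_rtranclp)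
    qed
    ultimately show ?thesis by (meson rtranclp.rtrancl_into_rtrancl converse_rtranclp_into_rtranclp)
  qed
  show "connected_on ?W E"
    unfolding connected_on_walk
  proof (intro ballI)
    fix u v assume uv: "u \<in> ?W" "v \<in> ?W"
    have "?R\<^sup>*\<^sup>* u v" using hub[OF uv(1)] hub[OF uv(2)] by (meson rtranclp_trans)
    then show "\<exists>p. walk E ?W p u v" using rt_walk uv(1) by fast
  qed
qed

end



lemma sum_list_map_concat: "sum_list (map f (concat xss)) = sum_list (map (\<lambda>xs. sum_list (map f xs)) xss)"
  by (induction xss) auto

lemma sufficiency:
  fixes k d :: nat and c :: "nat list"
  assumes d1: "d \<ge> 1" and lc: "length c = d"
    and pos: "\<forall>j\<in>{1..d}. coeff (b_poly c) (j - 1) > 0" and kd: "d \<ge> k"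
    and one: "\<forall>j\<in>{1..k}. coeff (b_poly c) (j - 1) = 1"
  shows "\<exists>(V :: nat set) E. simple_graph V E \<and> k_connected k V E \<and> chordal V E \<and> clique_vector V E = c"
proof -
  define \<beta> where "\<beta> m = coeff (b_poly c) m" for m
  define n where "n j = nat (\<beta> j - 1)" for j
  define L where "L = concat (map (\<lambda>j. replicate (n j) j) [0..<d])"
  have posm: "\<beta> m > 0" if "m < d" for m using pos that unfolding \<beta>_def by (metis Suc_leI atLeastAtMost_iff diff_Suc_1 le_add1 plus_1_eq_Suc zero_less_Suc le_simps(3))
  have onem: "\<beta> m = 1" if "m < k" for m using one that unfolding \<beta>_def by (metis Suc_leI atLeastAtMost_iff diff_Suc_1 le_add1 plus_1_eq_Suc le_simps(3))
  have Lb: "k \<le> x \<and> x < d" if xL: "x \<in> set L" for x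
  proof -
    obtain j where j: "j < d" "x \<in> set (replicate (n j) j)" using xL by (auto simp: L_def)
    then have "x = j" "n j > 0" by auto
    then have "\<beta> j > 1" by (simp add: n_def)
    then have "\<not> j < k" using onem by force
    then show ?thesis using j \<open>x = j\<close> by simp
  qed
  interpret cons d k L by unfold_locales (use kd Lb in auto)
  have sl: "(\<Sum>i<length L. monom (1::int) (L ! i)) = (\<Sum>j<d. smult (of_nat (n j)) (monom 1 j))"
  proof -
    have "(\<Sum>i<length L. monom (1::int) (L ! i)) = sum_list (map (monom 1) L)"
      by (simp add: sum_list_sum_nth lessThan_atLeast0)
    also have "\<dots> = sum_list (map (\<lambda>j. of_nat (n j) * monom 1 j) [0..<d])"
      unfolding L_def sum_list_map_concat by (simp add: sum_list_replicate comp_def)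
    also have "\<dots> = (\<Sum>j<d. of_nat (n j) * monom 1 j)"
      by (simp add: interv_sum_list_conv_sum_set_nat lessThan_atLeast0)
    finally show ?thesis by (simp add: of_nat_mult_conv_smult)
  qed
  have cpb: "cp (GV d L) (GE d L) = b_poly c"
  proof (rule poly_eqI)
    fix m
    have e: "(\<Sum>j<d. int (n j) * (if j = m then 1 else 0)) = (\<Sum>j<d. if j = m then int (n j) else 0)"
      by (rule sum.cong) auto
    have "coeff (cp (GV d L) (GE d L)) m = (\<Sum>j<d. if j = m then 1 else 0) + (\<Sum>j<d. int (n j) * (if j = m then 1 else 0))"
      unfolding cp_G sl by (simp add: coeff_sum coeff_monom)
    also have "\<dots> = (\<Sum>j<d. if j = m then 1 else 0) + (\<Sum>j<d. if j = m then int (n j) else 0)"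
      unfolding e ..
    also have "\<dots> = (if m < d then 1 + int (n m) else 0)" by (simp add: sum.delta)
    also have "\<dots> = coeff (b_poly c) m"
    proof (cases "m < d")
      case True
      then show ?thesis using posm[OF True] by (simp add: n_def \<beta>_def)
    next
      case False
      then show ?thesis using b_poly_coeff_high[of c m] lc by simp
    qed
    finally show "coeff (cp (GV d L) (GE d L)) m = coeff (b_poly c) m" .
  qed
  have "clique_vector (GV d L) (GE d L) = c"
  proof (rule b_poly_inj)
    show "length (clique_vector (GV d L) (GE d L)) = length c" by (simp only: length_cv cn lc)
    show "b_poly (clique_vector (GV d L) (GE d L)) = b_poly c" using b_poly_cv[OF simple] cpb by simp
  qed
  then show ?thesis using simple kconn chordal_G by blast
qed

theorem theorem1p1:
  fixes k d :: nat and c :: "nat list"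
  assumes "d \<ge> 1" and "length c = d"
  shows "(\<exists>(V :: nat set) E. simple_graph V E \<and> k_connected k V E \<and> chordal V E
              \<and> clique_vector V E = c)
     \<longleftrightarrow> ((\<forall>j\<in>{1..d}. coeff (b_poly c) (j - 1) > 0) \<and> d \<ge> k
          \<and> (\<forall>j\<in>{1..k}. coeff (b_poly c) (j - 1) = 1))"
proof
  assume "\<exists>(V :: nat set) E. simple_graph V E \<and> k_connected k V E \<and> chordal V E \<and> clique_vector V E = c"
  then obtain V :: "nat set" and E where G: "simple_graph V E" "k_connected k V E" "chordal V E" "clique_vector V E = c"
    by blast
  show "(\<forall>j\<in>{1..d}. coeff (b_poly c) (j - 1) > 0) \<and> d \<ge> k \<and> (\<forall>j\<in>{1..k}. coeff (b_poly c) (j - 1) = 1)"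
    by (rule necessity[OF G assms(2) assms(1)])
next
  assume "(\<forall>j\<in>{1..d}. coeff (b_poly c) (j - 1) > 0) \<and> d \<ge> k \<and> (\<forall>j\<in>{1..k}. coeff (b_poly c) (j - 1) = 1)"
  then show "\<exists>(V :: nat set) E. simple_graph V E \<and> k_connected k V E \<and> chordal V E \<and> clique_vector V E = c"
    using sufficiency[OF assms] by blast
qed


end
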